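(* Let $X$ be a uniformly convex Banach space and $Y$ any Banach space. Then the pair $(X,Y)$ has the sBPBp for compact operators: for every $\varepsilon>0$ and every compact operator $T\in\mathcal{L}(X,Y)$ with $\|T\|=1$ there exists $\eta=\eta(\varepsilon,T)>0$ such that whenever $x_0\in S_X$ satisfies $\|T(x_0)\|>1-\eta$, there exists $x_1\in S_X$ with $\|T(x_1)\|=1$ and $\|x_1-x_0\|<\varepsilon$.
   Context: All Banach spaces are over $\mathbb{K}=\mathbb{R}$ or $\mathbb{C}$. $S_X$ denotes the unit sphere of $X$ and $\mathcal{L}(X,Y)$ the space of bounded linear operators from $X$ to $Y$ with the operator norm. An operator is compact if the closure of the image of the unit ball is compact. *)

theory Defs
  imports "HOL-Analysis.Analysis"
begin

definition uniformly_convex :: "'a::real_normed_vector itself \<Rightarrow> bool" where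
  "uniformly_convex _ \<longleftrightarrow>
     (\<forall>e>0. \<exists>d>0. \<forall>x y::'a. norm x = 1 \<longrightarrow> norm y = 1 \<longrightarrow> norm (x - y) \<ge> e \<longrightarrow>
        norm ((x + y) /\<^sub>R 2) \<le> 1 - d)"

definition compact_operator :: "('a::real_normed_vector \<Rightarrow> 'b::real_normed_vector) \<Rightarrow> bool" where
  "compact_operator T \<longleftrightarrow> bounded_linear T \<and> compact (closure (T ` cball 0 1))"

end

theory Submission
  imports Defs
begin

theorem mainTheorem2:
  fixes T :: "'a::banach \<Rightarrow> 'b::banach" and e :: real
  assumes "uniformly_convex TYPE('a)"
    and "compact_operator T"
    and "onorm T = 1"
    and "e > 0"
  shows "\<exists>\<eta>>0. \<forall>x0\<in>sphere 0 1. norm (T x0) > 1 - \<eta> \<longrightarrow>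
           (\<exists>x1\<in>sphere 0 1. norm (T x1) = 1 \<and> norm (x1 - x0) < e)"
proof (rule ccontr)
  assume H: "\<not> ?thesis"
  have bl: "bounded_linear T" using assms(2) unfolding compact_operator_def by auto
  have cK: "compact (closure (T ` cball 0 1))" using assms(2) unfolding compact_operator_def by auto
  have nb: "\<And>v. norm (T v) \<le> norm v" using onorm[OF bl] assms(3) by simp
  have "\<forall>n. \<exists>x0. x0 \<in> sphere 0 1 \<and> norm (T x0) > 1 - inverse (real (Suc n)) \<and>
          (\<forall>x1\<in>sphere 0 1. norm (T x1) = 1 \<longrightarrow> norm (x1 - x0) \<ge> e)"
  proof
    fix n
    have "inverse (real (Suc n)) > 0" by simp
    then show "\<exists>x0. x0 \<in> sphere 0 1 \<and> norm (T x0) > 1 - inverse (real (Suc n)) \<and>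
          (\<forall>x1\<in>sphere 0 1. norm (T x1) = 1 \<longrightarrow> norm (x1 - x0) \<ge> e)"
      using H by (meson not_le)
  qed
  then obtain x where xs: "\<And>n. x n \<in> sphere 0 1"
    and xT: "\<And>n. norm (T (x n)) > 1 - inverse (real (Suc n))"
    and xe: "\<And>n x1. x1 \<in> sphere 0 1 \<Longrightarrow> norm (T x1) = 1 \<Longrightarrow> norm (x1 - x n) \<ge> e"
    by metis
  have lim1: "(\<lambda>n. norm (T (x n))) \<longlonglongrightarrow> 1"
  proof (rule tendsto_sandwich[of "\<lambda>n. 1 - inverse (real (Suc n))" _ sequentially "\<lambda>n. 1"])
    show "\<forall>\<^sub>F n in sequentially. 1 - inverse (real (Suc n)) \<le> norm (T (x n))"
      using xT by (intro always_eventually allI less_imp_le) simp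
    show "\<forall>\<^sub>F n in sequentially. norm (T (x n)) \<le> 1"
      using nb xs by (intro always_eventually allI) (metis mem_sphere_0)
    show "(\<lambda>n. 1 - inverse (real (Suc n))) \<longlonglongrightarrow> 1"
      using tendsto_diff[OF tendsto_const LIMSEQ_inverse_real_of_nat, of 1] by simp
  qed simp
  have "\<forall>n. T (x n) \<in> closure (T ` cball 0 1)"
    using xs by (auto intro: closure_subset[THEN subsetD])
  then obtain y r where r: "strict_mono r" and ylim: "((\<lambda>n. T (x n)) \<circ> r) \<longlonglongrightarrow> y"
    using compact_imp_seq_compact[OF cK] unfolding seq_compact_def by metis
  define z where "z = x \<circ> r"
  have zs: "\<And>n. norm (z n) = 1" using xs unfolding z_def by simp
  have zlim1: "(\<lambda>n. norm (T (z n))) \<longlonglongrightarrow> 1"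
    using LIMSEQ_subseq_LIMSEQ[OF lim1 r] unfolding z_def by (simp add: o_def)
  have Tzc: "Cauchy (\<lambda>n. T (z n))"
    using LIMSEQ_imp_Cauchy[OF ylim] unfolding z_def by (simp add: o_def)
  have "Cauchy z"
  proof (rule CauchyI)
    fix \<epsilon> :: real assume "0 < \<epsilon>"
    then obtain d where d: "d > 0" and dU: "\<And>u v::'a. norm u = 1 \<Longrightarrow> norm v = 1 \<Longrightarrow>
        norm (u - v) \<ge> \<epsilon> \<Longrightarrow> norm ((u + v) /\<^sub>R 2) \<le> 1 - d"
      using assms(1) unfolding uniformly_convex_def by metis
    obtain M1 where M1: "\<forall>m\<ge>M1. \<forall>n\<ge>M1. norm (T (z m) - T (z n)) < d/2"
      using CauchyD[OF Tzc, of "d/2"] d by auto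
    obtain M2 where M2: "\<forall>n\<ge>M2. norm (norm (T (z n)) - 1) < d/4"
      using LIMSEQ_D[OF zlim1, of "d/4"] d by auto
    show "\<exists>M. \<forall>m\<ge>M. \<forall>n\<ge>M. norm (z m - z n) < \<epsilon>"
    proof (intro exI allI impI)
      fix m n assume m: "max M1 M2 \<le> m" and n: "max M1 M2 \<le> n"
      show "norm (z m - z n) < \<epsilon>"
      proof (rule ccontr)
        assume "\<not> norm (z m - z n) < \<epsilon>"
        hence a: "norm ((z m + z n) /\<^sub>R 2) \<le> 1 - d" using dU zs by (meson not_less)
        have "T ((z m + z n) /\<^sub>R 2) = (T (z m) + T (z n)) /\<^sub>R 2"
          using bl by (simp add: linear_add linear_scale bounded_linear.linear)
        hence b: "norm (T (z m) + T (z n)) \<le> 2 - 2*d"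
          using nb[of "(z m + z n) /\<^sub>R 2"] a by simp
        have c1: "norm (T (z m) - T (z n)) < d/2" using M1 m n by auto
        have c2: "norm (T (z m)) > 1 - d/4" proof -
          have "norm (norm (T (z m)) - 1) < d/4" using M2 m by auto
          then show ?thesis unfolding real_norm_def by linarith
        qed
        have "2 * norm (T (z m)) \<le> norm (T (z m) + T (z n)) + norm (T (z m) - T (z n))"
          using norm_triangle_ineq[of "T (z m) + T (z n)" "T (z m) - T (z n)"]
          by (simp add: algebra_simps scaleR_2[symmetric])
        then show False using b c1 c2 d by linarith
      qed
    qed
  qed
  then obtain l where zl: "z \<longlonglongrightarrow> l" using Cauchy_convergent_iff convergent_def by blast
  have "(\<lambda>n. norm (z n)) \<longlonglongrightarrow> norm l" using tendsto_norm[OF zl] .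
  hence "(\<lambda>n. 1::real) \<longlonglongrightarrow> norm l" using zs by simp
  hence nl: "norm l = 1" using LIMSEQ_unique[OF tendsto_const] by metis
  have "(\<lambda>n. T (z n)) \<longlonglongrightarrow> T l" using bounded_linear.tendsto[OF bl zl] .
  hence "(\<lambda>n. norm (T (z n))) \<longlonglongrightarrow> norm (T l)" by (rule tendsto_norm)
  hence nTl: "norm (T l) = 1" using LIMSEQ_unique[OF _ zlim1] by blast
  have ge: "\<And>n. norm (l - z n) \<ge> e" using xe[of l] nl nTl unfolding z_def by simp
  obtain N where "\<forall>n\<ge>N. norm (z n - l) < e" using LIMSEQ_D[OF zl assms(4)] by auto
  then have "norm (z N - l) < e" by simp
  then show False using ge[of N] by (simp add: norm_minus_commute)
qed

end
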